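(* Let $X$ be a topological space and $Y$ be a metrizable space. Then $$\mathrm{B}_1(X,Y)\subseteq \Sigma^{f*}_0(X,Y)=\mathrm{K}_1(X,Y)\cap\Sigma^f(X,Y).$$
   Context: A subset of $X$ is functionally closed (functionally open) if it is of the form $\varphi^{-1}(0)$ (resp. $X\setminus\varphi^{-1}(0)$) for some continuous $\varphi:X\to[0,1]$. A functionally $F_\sigma$-set is a countable union of functionally closed sets; a functionally $G_\delta$-set is a countable intersection of functionally open sets. $\mathrm{B}_1(X,Y)$ is the set of mappings $f:X\to Y$ that are pointwise limits of sequences of continuous mappings $X\to Y$. $\mathrm{K}_1(X,Y)$ is the set of mappings $f:X\to Y$ such that $f^{-1}(V)$ is a functionally $F_\sigma$-set in $X$ for every open $V\subseteq Y$. A family $(A_i:i\in I)$ of subsets of $X$ is strongly functionally discrete (sfd) if there is a discrete family $(U_i:i\in I)$ of functionally open subsets of $X$ with $\overline{A_i}\subseteq U_i$ for all $i$ (a family is discrete if every point has a neighborhood meeting at most one member). A family is $\sigma$-sfd if it is a countable union of sfd families. A family $\mathcal B$ of subsets of $X$ is a base for $f:X\to Y$ if for every open $V\subseteq Y$, $f^{-1}(V)$ is a union of members of $\mathcal B$. $\Sigma^f(X,Y)$ is the set of mappings $f:X\to Y$ having a $\sigma$-sfd base; $\Sigma^{f*}_0(X,Y)$ is the set of mappings $f:X\to Y$ having a $\sigma$-sfd base consisting of functionally closed subsets of $X$. *)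

theory Defs
  imports "HOL-Analysis.Analysis"
begin

definition fclosed :: "'a topology \<Rightarrow> 'a set \<Rightarrow> bool" where
  "fclosed X A \<longleftrightarrow> (\<exists>\<phi>. continuous_map X (subtopology euclideanreal {0..1}) \<phi> \<and>
      A = {x \<in> topspace X. \<phi> x = 0})"

definition fopen :: "'a topology \<Rightarrow> 'a set \<Rightarrow> bool" where
  "fopen X A \<longleftrightarrow> (\<exists>\<phi>. continuous_map X (subtopology euclideanreal {0..1}) \<phi> \<and>
      A = topspace X - {x \<in> topspace X. \<phi> x = 0})"

definition fFsigma :: "'a topology \<Rightarrow> 'a set \<Rightarrow> bool" where
  "fFsigma X A \<longleftrightarrow> (\<exists>F :: nat \<Rightarrow> 'a set. (\<forall>n. fclosed X (F n)) \<and> A = (\<Union>n. F n))"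

definition fGdelta :: "'a topology \<Rightarrow> 'a set \<Rightarrow> bool" where
  "fGdelta X A \<longleftrightarrow> (\<exists>G :: nat \<Rightarrow> 'a set. (\<forall>n. fopen X (G n)) \<and> A = (\<Inter>n. G n))"

definition Baire1 :: "'a topology \<Rightarrow> 'b topology \<Rightarrow> ('a \<Rightarrow> 'b) \<Rightarrow> bool" where
  "Baire1 X Y f \<longleftrightarrow> (\<exists>g :: nat \<Rightarrow> 'a \<Rightarrow> 'b. (\<forall>n. continuous_map X Y (g n)) \<and>
      (\<forall>x \<in> topspace X. limitin Y (\<lambda>n. g n x) (f x) sequentially))"

definition K1 :: "'a topology \<Rightarrow> 'b topology \<Rightarrow> ('a \<Rightarrow> 'b) \<Rightarrow> bool" where
  "K1 X Y f \<longleftrightarrow> (\<forall>V. openin Y V \<longrightarrow> fFsigma X {x \<in> topspace X. f x \<in> V})"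

definition discrete_family :: "'a topology \<Rightarrow> 'i set \<Rightarrow> ('i \<Rightarrow> 'a set) \<Rightarrow> bool" where
  "discrete_family X I U \<longleftrightarrow> (\<forall>x \<in> topspace X. \<exists>N. openin X N \<and> x \<in> N \<and>
      (\<forall>i \<in> I. \<forall>j \<in> I. U i \<inter> N \<noteq> {} \<and> U j \<inter> N \<noteq> {} \<longrightarrow> i = j))"

definition sfd :: "'a topology \<Rightarrow> 'i set \<Rightarrow> ('i \<Rightarrow> 'a set) \<Rightarrow> bool" where
  "sfd X I A \<longleftrightarrow> (\<exists>U. discrete_family X I U \<and>
      (\<forall>i \<in> I. fopen X (U i) \<and> X closure_of (A i) \<subseteq> U i))"

definition sigma_sfd :: "'a topology \<Rightarrow> 'a set set \<Rightarrow> bool" where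
  "sigma_sfd X \<B> \<longleftrightarrow> (\<exists>\<A> :: nat \<Rightarrow> 'a set set. (\<forall>n. sfd X (\<A> n) id) \<and> \<B> = (\<Union>n. \<A> n))"

definition base_for :: "'a topology \<Rightarrow> 'b topology \<Rightarrow> ('a \<Rightarrow> 'b) \<Rightarrow> 'a set set \<Rightarrow> bool" where
  "base_for X Y f \<B> \<longleftrightarrow> (\<forall>V. openin Y V \<longrightarrow>
      (\<exists>\<C> \<subseteq> \<B>. {x \<in> topspace X. f x \<in> V} = \<Union>\<C>))"

definition Sigma_f :: "'a topology \<Rightarrow> 'b topology \<Rightarrow> ('a \<Rightarrow> 'b) \<Rightarrow> bool" where
  "Sigma_f X Y f \<longleftrightarrow> (\<exists>\<B>. sigma_sfd X \<B> \<and> base_for X Y f \<B>)"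

definition Sigma_f_star_0 :: "'a topology \<Rightarrow> 'b topology \<Rightarrow> ('a \<Rightarrow> 'b) \<Rightarrow> bool" where
  "Sigma_f_star_0 X Y f \<longleftrightarrow>
     (\<exists>\<B>. sigma_sfd X \<B> \<and> base_for X Y f \<B> \<and> (\<forall>B \<in> \<B>. fclosed X B))"

end

theory Submission
  imports Defs
begin


lemma fclosed_iff:
  "fclosed X A \<longleftrightarrow> (\<exists>\<phi>. continuous_map X euclideanreal \<phi> \<and> A = {x \<in> topspace X. \<phi> x = 0})"
proof
  assume "fclosed X A"
  then show "\<exists>\<phi>. continuous_map X euclideanreal \<phi> \<and> A = {x \<in> topspace X. \<phi> x = 0}"
    unfolding fclosed_def by (auto simp: continuous_map_in_subtopology)
next
  assume "\<exists>\<phi>. continuous_map X euclideanreal \<phi> \<and> A = {x \<in> topspace X. \<phi> x = 0}"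
  then obtain \<phi> where c: "continuous_map X euclideanreal \<phi>" and A: "A = {x \<in> topspace X. \<phi> x = 0}" by blast
  let ?g = "\<lambda>x. min 1 \<bar>\<phi> x\<bar>"
  have "continuous_map X euclideanreal ?g" using c by (intro continuous_intros) auto
  moreover have "?g ` topspace X \<subseteq> {0..1}" by auto
  moreover have "A = {x \<in> topspace X. ?g x = 0}" using A by auto
  ultimately show "fclosed X A" unfolding fclosed_def continuous_map_in_subtopology
    by blast
qed

lemma fopen_iff:
  "fopen X A \<longleftrightarrow> (\<exists>\<psi>. continuous_map X euclideanreal \<psi> \<and> (\<forall>x. \<psi> x \<ge> 0) \<and> A = {x \<in> topspace X. \<psi> x > 0})"
proof
  assume "fopen X A"
  then obtain \<phi> where c: "continuous_map X (subtopology euclideanreal {0..1}) \<phi>" and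
     A: "A = topspace X - {x \<in> topspace X. \<phi> x = 0}" unfolding fopen_def by blast
  let ?g = "\<lambda>x. \<bar>\<phi> x\<bar>"
  have "continuous_map X euclideanreal ?g" using c
    by (intro continuous_intros) (auto simp: continuous_map_in_subtopology)
  moreover have "A = {x \<in> topspace X. ?g x > 0}" using A by auto
  ultimately show "\<exists>\<psi>. continuous_map X euclideanreal \<psi> \<and> (\<forall>x. \<psi> x \<ge> 0) \<and> A = {x \<in> topspace X. \<psi> x > 0}"
    by (intro exI[of _ ?g]) auto
next
  assume "\<exists>\<psi>. continuous_map X euclideanreal \<psi> \<and> (\<forall>x. \<psi> x \<ge> 0) \<and> A = {x \<in> topspace X. \<psi> x > 0}"
  then obtain \<phi> where c: "continuous_map X euclideanreal \<phi>" and p: "\<forall>x. \<phi> x \<ge> 0"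
    and A: "A = {x \<in> topspace X. \<phi> x > 0}" by blast
  let ?g = "\<lambda>x. min 1 \<bar>\<phi> x\<bar>"
  have "continuous_map X euclideanreal ?g" using c by (intro continuous_intros) auto
  moreover have "?g ` topspace X \<subseteq> {0..1}" by auto
  moreover have "A = topspace X - {x \<in> topspace X. ?g x = 0}" using A p
    by (auto simp: less_le)
  ultimately show "fopen X A" unfolding fopen_def continuous_map_in_subtopology
    by blast
qed

lemma fclosed_subset: "fclosed X A \<Longrightarrow> A \<subseteq> topspace X"
  by (auto simp: fclosed_def)

lemma fclosed_closedin: "fclosed X A \<Longrightarrow> closedin X A"
proof -
  assume "fclosed X A"
  then obtain \<phi> where c: "continuous_map X euclideanreal \<phi>" and A: "A = {x \<in> topspace X. \<phi> x = 0}"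
    by (auto simp: fclosed_iff)
  have "closedin X {x \<in> topspace X. \<phi> x \<in> {0}}"
    by (rule closedin_continuous_map_preimage[OF c]) auto
  then show ?thesis using A by simp
qed

lemma fopen_openin: "fopen X A \<Longrightarrow> openin X A"
proof -
  assume "fopen X A"
  then obtain \<phi> where c: "continuous_map X euclideanreal \<phi>" and A: "A = {x \<in> topspace X. \<phi> x > 0}"
    by (auto simp: fopen_iff)
  have "openin X {x \<in> topspace X. \<phi> x \<in> {0<..}}"
    by (rule openin_continuous_map_preimage[OF c]) auto
  then show ?thesis using A by simp
qed

lemma fclosed_Int: "fclosed X A \<Longrightarrow> fclosed X B \<Longrightarrow> fclosed X (A \<inter> B)"
proof -
  assume "fclosed X A" "fclosed X B"
  then obtain \<phi> \<psi> where c: "continuous_map X euclideanreal \<phi>" "continuous_map X euclideanreal \<psi>"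
    and A: "A = {x \<in> topspace X. \<phi> x = 0}" and B: "B = {x \<in> topspace X. \<psi> x = 0}"
    by (auto simp: fclosed_iff)
  have "continuous_map X euclideanreal (\<lambda>x. \<bar>\<phi> x\<bar> + \<bar>\<psi> x\<bar>)" using c by (intro continuous_intros)
  moreover have "A \<inter> B = {x \<in> topspace X. \<bar>\<phi> x\<bar> + \<bar>\<psi> x\<bar> = 0}" using A B by auto
  ultimately show ?thesis by (auto simp: fclosed_iff)
qed

lemma fclosed_preimage:
  assumes g: "continuous_map X Y g" and C: "fclosed Y C"
  shows "fclosed X {x \<in> topspace X. g x \<in> C}"
proof -
  obtain \<phi> where c: "continuous_map Y euclideanreal \<phi>" and A: "C = {y \<in> topspace Y. \<phi> y = 0}"
    using C by (auto simp: fclosed_iff)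
  have "continuous_map X euclideanreal (\<phi> \<circ> g)" using c g continuous_map_compose by blast
  moreover have "{x \<in> topspace X. g x \<in> C} = {x \<in> topspace X. (\<phi> \<circ> g) x = 0}"
    using A g by (auto simp: continuous_map_def)
  ultimately show ?thesis by (auto simp: fclosed_iff)
qed

lemma fopen_preimage:
  assumes g: "continuous_map X Y g" and C: "fopen Y C"
  shows "fopen X {x \<in> topspace X. g x \<in> C}"
proof -
  obtain \<phi> where c: "continuous_map Y euclideanreal \<phi>" and p: "\<forall>x. \<phi> x \<ge> 0" and A: "C = {y \<in> topspace Y. \<phi> y > 0}"
    using C by (auto simp: fopen_iff)
  have "continuous_map X euclideanreal (\<phi> \<circ> g)" using c g continuous_map_compose by blast
  moreover have "{x \<in> topspace X. g x \<in> C} = {x \<in> topspace X. (\<phi> \<circ> g) x > 0}"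
    using A g by (auto simp: continuous_map_def)
  ultimately show ?thesis using p by (auto simp: fopen_iff)
qed

lemma fopen_empty: "fopen X {}"
  unfolding fopen_iff by (intro exI[of _ "\<lambda>x. 0"]) auto

lemma continuous_map_locally:
  assumes "\<And>x. x \<in> topspace X \<Longrightarrow> \<exists>N g. openin X N \<and> x \<in> N \<and> continuous_map X euclideanreal g \<and> (\<forall>y\<in>N. h y = g y)"
  shows "continuous_map X euclideanreal h"
  unfolding continuous_map_def
proof (intro conjI allI impI)
  show "h \<in> topspace X \<rightarrow> topspace euclideanreal" by auto
  fix T assume T: "openin euclideanreal T"
  show "openin X {x \<in> topspace X. h x \<in> T}"
  proof (subst openin_subopen, intro ballI)
    fix x assume x: "x \<in> {x \<in> topspace X. h x \<in> T}"
    then obtain N g where N: "openin X N" "x \<in> N" and g: "continuous_map X euclideanreal g"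
      and e: "\<forall>y\<in>N. h y = g y" using assms by blast
    have "openin X {x \<in> topspace X. g x \<in> T}" using g T by (simp add: continuous_map_def)
    then have "openin X (N \<inter> {x \<in> topspace X. g x \<in> T})" using N by blast
    moreover have "x \<in> N \<inter> {x \<in> topspace X. g x \<in> T}" using x N e by auto
    moreover have "N \<inter> {x \<in> topspace X. g x \<in> T} \<subseteq> {x \<in> topspace X. h x \<in> T}" using e by auto
    ultimately show "\<exists>T'. openin X T' \<and> x \<in> T' \<and> T' \<subseteq> {x \<in> topspace X. h x \<in> T}" by blast
  qed
qed



lemma fclosed_INT_nat:
  assumes A: "\<And>i::nat. fclosed X (A i)"
  shows "fclosed X (\<Inter>i. A i)"
proof -
  have "\<forall>i. \<exists>\<phi>. continuous_map X (subtopology euclideanreal {0..1}) \<phi> \<and> A i = {x \<in> topspace X. \<phi> x = 0}"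
    using A unfolding fclosed_def by blast
  then obtain \<phi> where \<phi>: "\<And>i. continuous_map X (subtopology euclideanreal {0..1}) (\<phi> i)"
    and Ai: "\<And>i. A i = {x \<in> topspace X. \<phi> i x = 0}" by metis
  have c: "\<And>i. continuous_map X euclideanreal (\<phi> i)" and rng: "\<And>i x. x \<in> topspace X \<Longrightarrow> \<phi> i x \<in> {0..1}"
    using \<phi> by (auto simp: continuous_map_in_subtopology Pi_iff)
  define t where "t i x = (1/2::real)^i * \<phi> i x" for i x
  define h where "h x = (\<Sum>i. t i x)" for x
  have tb: "\<bar>t i x\<bar> \<le> (1/2)^i" "0 \<le> t i x" if "x \<in> topspace X" for i x
    using rng[OF that, of i] by (auto simp: t_def abs_mult intro!: mult_left_le)
  have summ: "summable (\<lambda>i. t i x)" if "x \<in> topspace X" for x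
    by (rule summable_comparison_test[of _ "\<lambda>i. (1/2::real)^i"]) (use tb[OF that] in auto)
  have gsum: "(\<Sum>n. (1/2::real)^(n+N)) = 2 * (1/2)^N" for N
  proof -
    have "(\<Sum>n. (1/2::real)^(n+N)) = (\<Sum>n. (1/2)^N * (1/2)^n)" by (simp add: power_add mult.commute)
    also have "\<dots> = (1/2)^N * (\<Sum>n. (1/2::real)^n)" by (rule suminf_mult) simp
    also have "\<dots> = 2 * (1/2)^N" by (simp add: suminf_geometric)
    finally show ?thesis .
  qed
  have tail: "\<bar>(\<Sum>i<N. t i x) - h x\<bar> \<le> 2 * (1/2)^N" if x: "x \<in> topspace X" for x N
  proof -
    have "h x = (\<Sum>n. t (n + N) x) + (\<Sum>i<N. t i x)"
      unfolding h_def by (rule suminf_split_initial_segment[OF summ[OF x]])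
    moreover have "(\<Sum>n. t (n + N) x) \<le> (\<Sum>n. (1/2::real)^(n+N))"
    proof (rule suminf_le)
      show "summable (\<lambda>n. t (n + N) x)" using summ[OF x] by (simp add: summable_iff_shift[where f="\<lambda>i. t i x"])
      show "summable (\<lambda>n. (1/2::real)^(n+N))" by (simp add: summable_iff_shift[where f="\<lambda>n. (1/2::real)^n"])
    qed (use tb[OF x] in auto)
    moreover have "0 \<le> (\<Sum>n. t (n + N) x)"
      by (rule suminf_nonneg) (use summ[OF x] tb[OF x] in \<open>auto simp: summable_iff_shift[where f="\<lambda>i. t i x"]\<close>)
    ultimately show ?thesis using gsum[of N] by simp
  qed
  have "continuous_map X Met_TC.mtopology h"
  proof (rule Met_TC.continuous_map_uniform_limit[where f="\<lambda>N x. \<Sum>i<N. t i x" and F=sequentially])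
    have "continuous_map X euclideanreal (\<lambda>x. \<Sum>i<N. t i x)" for N
      unfolding t_def by (intro continuous_intros c) auto
    then show "\<forall>\<^sub>F N in sequentially. continuous_map X Met_TC.mtopology (\<lambda>x. \<Sum>i<N. t i x)"
      by simp
    fix \<epsilon> :: real assume e: "0 < \<epsilon>"
    obtain N0 where N0: "(1/2::real)^N0 < \<epsilon>/2" using real_arch_pow_inv[of "\<epsilon>/2" "1/2"] e by auto
    show "\<forall>\<^sub>F N in sequentially. \<forall>x\<in>topspace X. h x \<in> UNIV \<and> dist (\<Sum>i<N. t i x) (h x) < \<epsilon>"
    proof (rule eventually_sequentiallyI[of N0], intro ballI conjI)
      fix N x assume N: "N0 \<le> N" and x: "x \<in> topspace X"
      have le: "(1/2::real)^N \<le> (1/2)^N0" using N by (simp add: power_decreasing)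
      have "dist (\<Sum>i<N. t i x) (h x) = \<bar>(\<Sum>i<N. t i x) - h x\<bar>" by (simp add: dist_real_def)
      then show "dist (\<Sum>i<N. t i x) (h x) < \<epsilon>" using tail[OF x, of N] N0 le by linarith
    qed auto
  qed auto
  then have ch: "continuous_map X euclideanreal h" by simp
  have "(\<Inter>i. A i) = {x \<in> topspace X. h x = 0}"
  proof -
    have "h x = 0 \<longleftrightarrow> (\<forall>i. \<phi> i x = 0)" if x: "x \<in> topspace X" for x
    proof -
      have "h x = 0 \<longleftrightarrow> (\<forall>i. t i x = 0)" unfolding h_def
        by (rule suminf_eq_zero_iff[OF summ[OF x]]) (use tb[OF x] in auto)
      then show ?thesis by (simp add: t_def)
    qed
    then show ?thesis using Ai by auto
  qed
  then show ?thesis using ch by (auto simp: fclosed_iff)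
qed

lemma discrete_familyE:
  assumes "discrete_family X I U" "x \<in> topspace X"
  obtains N where "openin X N" "x \<in> N" "\<And>i j. i\<in>I \<Longrightarrow> j\<in>I \<Longrightarrow> U i \<inter> N \<noteq> {} \<Longrightarrow> U j \<inter> N \<noteq> {} \<Longrightarrow> i = j"
proof -
  have "\<exists>N. openin X N \<and> x \<in> N \<and> (\<forall>i \<in> I. \<forall>j \<in> I. U i \<inter> N \<noteq> {} \<and> U j \<inter> N \<noteq> {} \<longrightarrow> i = j)"
    using assms unfolding discrete_family_def by (rule bspec)
  then obtain N where N: "openin X N \<and> x \<in> N \<and> (\<forall>i \<in> I. \<forall>j \<in> I. U i \<inter> N \<noteq> {} \<and> U j \<inter> N \<noteq> {} \<longrightarrow> i = j)"
    by (rule exE)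
  show ?thesis
  proof (rule that)
    show "openin X N" using N by (rule conjunct1)
    show "x \<in> N" using N by simp
    fix i j assume "i\<in>I" "j\<in>I" "U i \<inter> N \<noteq> {}" "U j \<inter> N \<noteq> {}"
    then show "i = j" using N[THEN conjunct2, THEN conjunct2] by (meson)
  qed
qed

lemma discrete_family_mono:
  assumes d: "discrete_family X I U" and J: "J \<subseteq> I"
  shows "discrete_family X J U"
  unfolding discrete_family_def
proof
  fix x assume x: "x \<in> topspace X"
  obtain N where N: "openin X N" "x \<in> N" and u: "\<And>i j. i\<in>I \<Longrightarrow> j\<in>I \<Longrightarrow> U i \<inter> N \<noteq> {} \<Longrightarrow> U j \<inter> N \<noteq> {} \<Longrightarrow> i = j"
    using discrete_familyE[OF d x] by metis
  show "\<exists>N. openin X N \<and> x \<in> N \<and> (\<forall>i\<in>J. \<forall>j\<in>J. U i \<inter> N \<noteq> {} \<and> U j \<inter> N \<noteq> {} \<longrightarrow> i = j)"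
    using J N u by (intro exI[of _ N]) (simp add: subset_iff)
qed

lemma sfd_mono:
  assumes s: "sfd X I A" and J: "J \<subseteq> I"
  shows "sfd X J A"
proof -
  obtain U where d: "discrete_family X I U" and r: "\<forall>i\<in>I. fopen X (U i) \<and> X closure_of (A i) \<subseteq> U i"
    using s unfolding sfd_def by blast
  have "discrete_family X J U" by (rule discrete_family_mono[OF d J])
  moreover have "\<forall>i\<in>J. fopen X (U i) \<and> X closure_of (A i) \<subseteq> U i" using r J by blast
  ultimately show ?thesis unfolding sfd_def by blast
qed

lemma sfd_imageI:
  assumes fo: "\<And>a. a \<in> T \<Longrightarrow> fopen X (U a)"
    and cl: "\<And>a. a \<in> T \<Longrightarrow> X closure_of (A a) \<subseteq> U a"
    and dis: "\<And>x. x \<in> topspace X \<Longrightarrow> \<exists>N. openin X N \<and> x \<in> N \<and>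
               (\<forall>a\<in>T. \<forall>b\<in>T. U a \<inter> N \<noteq> {} \<and> U b \<inter> N \<noteq> {} \<longrightarrow> a = b)"
  shows "sfd X (A ` T) id"
proof -
  define ch where "ch E = (SOME a. a \<in> T \<and> A a = E)" for E
  have ch: "ch E \<in> T \<and> A (ch E) = E" if "E \<in> A ` T" for E
    unfolding ch_def by (rule someI_ex) (use that in auto)
  define U' where "U' E = U (ch E)" for E
  have "discrete_family X (A ` T) U'"
    unfolding discrete_family_def
  proof (intro ballI)
    fix x assume x: "x \<in> topspace X"
    obtain N where N: "openin X N" "x \<in> N" "\<forall>a\<in>T. \<forall>b\<in>T. U a \<inter> N \<noteq> {} \<and> U b \<inter> N \<noteq> {} \<longrightarrow> a = b"
      using dis[OF x] by blast
    show "\<exists>N. openin X N \<and> x \<in> N \<and> (\<forall>i\<in>A ` T. \<forall>j\<in>A ` T. U' i \<inter> N \<noteq> {} \<and> U' j \<inter> N \<noteq> {} \<longrightarrow> i = j)"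
    proof (intro exI conjI ballI impI)
      fix i j assume i: "i \<in> A ` T" and j: "j \<in> A ` T" and m: "U' i \<inter> N \<noteq> {} \<and> U' j \<inter> N \<noteq> {}"
      have "ch i = ch j" using N(3) ch[OF i] ch[OF j] m unfolding U'_def by blast
      then show "i = j" using ch[OF i] ch[OF j] by metis
    qed (use N in auto)
  qed
  moreover have "\<forall>i \<in> A ` T. fopen X (U' i) \<and> X closure_of (id i) \<subseteq> U' i"
  proof
    fix i assume i: "i \<in> A ` T"
    have "fopen X (U (ch i))" "X closure_of (A (ch i)) \<subseteq> U (ch i)" using ch[OF i] fo cl by blast+
    then show "fopen X (U' i) \<and> X closure_of (id i) \<subseteq> U' i" using ch[OF i] unfolding U'_def by simp
  qed
  ultimately show ?thesis unfolding sfd_def by blast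
qed

lemma fclosed_Union_sfd:
  assumes s: "sfd X I A" and fc: "\<And>i. i \<in> I \<Longrightarrow> fclosed X (A i)"
  shows "fclosed X (\<Union>i\<in>I. A i)"
proof -
  obtain U where dU: "discrete_family X I U" and fU: "\<And>i. i \<in> I \<Longrightarrow> fopen X (U i)"
    and cU: "\<And>i. i \<in> I \<Longrightarrow> X closure_of (A i) \<subseteq> U i"
    using s unfolding sfd_def by blast
  have "\<forall>i\<in>I. \<exists>\<phi>. continuous_map X euclideanreal \<phi> \<and> A i = {x \<in> topspace X. \<phi> x = 0}"
    using fc by (auto simp: fclosed_iff)
  then obtain \<phi>0 where \<phi>0: "\<And>i. i \<in> I \<Longrightarrow> continuous_map X euclideanreal (\<phi>0 i) \<and> A i = {x \<in> topspace X. \<phi>0 i x = 0}"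
    by metis
  define \<phi> where "\<phi> i x = \<bar>\<phi>0 i x\<bar>" for i x
  have c\<phi>: "\<And>i. i \<in> I \<Longrightarrow> continuous_map X euclideanreal (\<phi> i)"
    using \<phi>0 unfolding \<phi>_def by (auto intro: continuous_intros)
  have A\<phi>: "\<And>i. i \<in> I \<Longrightarrow> A i = {x \<in> topspace X. \<phi> i x = 0}" using \<phi>0 unfolding \<phi>_def by auto
  have "\<forall>i\<in>I. \<exists>\<psi>. continuous_map X euclideanreal \<psi> \<and> (\<forall>x. \<psi> x \<ge> 0) \<and> U i = {x \<in> topspace X. \<psi> x > 0}"
    using fU by (auto simp: fopen_iff)
  then obtain \<psi> where c\<psi>: "\<And>i. i \<in> I \<Longrightarrow> continuous_map X euclideanreal (\<psi> i)"
    and p\<psi>: "\<And>i x. i \<in> I \<Longrightarrow> \<psi> i x \<ge> 0" and U\<psi>: "\<And>i. i \<in> I \<Longrightarrow> U i = {x \<in> topspace X. \<psi> i x > 0}"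
    by metis
  have AU: "A i \<subseteq> U i" if "i \<in> I" for i
    using cU[OF that] closure_of_subset[of "A i" X] fclosed_subset[OF fc[OF that]] by blast
  have pos: "\<phi> i x + \<psi> i x > 0" if "i \<in> I" "x \<in> topspace X" for i x
  proof (cases "\<phi> i x = 0")
    case True then have "x \<in> U i" using AU[OF that(1)] A\<phi>[OF that(1)] that by auto
    then show ?thesis using U\<psi>[OF that(1)] True by auto
  next
    case False then show ?thesis using p\<psi>[OF that(1)] by (simp add: \<phi>_def add_pos_nonneg)
  qed
  define hi where "hi i x = \<phi> i x / (\<phi> i x + \<psi> i x)" for i x
  have chi: "continuous_map X euclideanreal (hi i)" if "i \<in> I" for i
    unfolding hi_def using c\<phi>[OF that] c\<psi>[OF that] pos[OF that]
    by (intro continuous_intros) (auto simp: less_le)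
  have hi_out: "hi i x = 1" if "i \<in> I" "x \<in> topspace X" "x \<notin> U i" for i x
  proof -
    have "\<psi> i x = 0" using U\<psi>[OF that(1)] that p\<psi>[OF that(1), of x] by auto
    then show ?thesis using pos[OF that(1,2)] by (simp add: hi_def)
  qed
  have hi0: "hi i x = 0 \<longleftrightarrow> x \<in> A i" if "i \<in> I" "x \<in> topspace X" for i x
    using pos[OF that] A\<phi>[OF that(1)] that by (auto simp: hi_def)
  define sel where "sel x = (SOME i. i \<in> I \<and> x \<in> U i)" for x
  define h where "h x = (if \<exists>i\<in>I. x \<in> U i then hi (sel x) x else 1)" for x
  have uniq: "i = j" if "i \<in> I" "j \<in> I" "x \<in> U i" "x \<in> U j" for i j x
  proof -
    have "x \<in> topspace X" using that(1,3) U\<psi>[OF that(1)] by blast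
    then obtain N where "openin X N" "x \<in> N" and u: "\<And>i j. i\<in>I \<Longrightarrow> j\<in>I \<Longrightarrow> U i \<inter> N \<noteq> {} \<Longrightarrow> U j \<inter> N \<noteq> {} \<Longrightarrow> i = j"
      using discrete_familyE[OF dU] by metis
    have "U i \<inter> N \<noteq> {}" "U j \<inter> N \<noteq> {}" using that \<open>x \<in> N\<close> by auto
    then show ?thesis using u that(1,2) by blast
  qed
  have hsel: "h x = hi i x" if "i \<in> I" "x \<in> U i" for i x
  proof -
    have "sel x \<in> I \<and> x \<in> U (sel x)" unfolding sel_def by (rule someI_ex) (use that in blast)
    then have "sel x = i" using uniq that by blast
    then show ?thesis using that unfolding h_def by auto
  qed
  have "continuous_map X euclideanreal h"
  proof (rule continuous_map_locally)
    fix x assume x: "x \<in> topspace X"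
    obtain N where N: "openin X N" "x \<in> N" "\<And>i j. i\<in>I \<Longrightarrow> j\<in>I \<Longrightarrow> U i \<inter> N \<noteq> {} \<Longrightarrow> U j \<inter> N \<noteq> {} \<Longrightarrow> i = j"
      using discrete_familyE[OF dU x] by metis
    show "\<exists>N g. openin X N \<and> x \<in> N \<and> continuous_map X euclideanreal g \<and> (\<forall>y\<in>N. h y = g y)"
    proof (cases "\<exists>i\<in>I. U i \<inter> N \<noteq> {}")
      case True
      then obtain i where i: "i \<in> I" "U i \<inter> N \<noteq> {}" by blast
      have "h y = hi i y" if y: "y \<in> N" for y
      proof (cases "y \<in> U i")
        case True then show ?thesis using hsel i by blast
      next
        case False
        have yt: "y \<in> topspace X" using y N(1) openin_subset by blast
        have "\<not> (\<exists>j\<in>I. y \<in> U j)" using N(3) i False y by blast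
        then show ?thesis using hi_out[OF i(1) yt False] unfolding h_def by auto
      qed
      then show ?thesis using N chi[OF i(1)] by blast
    next
      case False
      have "h y = 1" if "y \<in> N" for y
      proof -
        have "\<not> (\<exists>i\<in>I. y \<in> U i)" using False that by blast
        then show ?thesis unfolding h_def by simp
      qed
      then show ?thesis using N by (intro exI[of _ N] exI[of _ "\<lambda>x. 1"]) auto
    qed
  qed
  moreover have "(\<Union>i\<in>I. A i) = {x \<in> topspace X. h x = 0}"
  proof (intro equalityI subsetI)
    fix x assume "x \<in> (\<Union>i\<in>I. A i)"
    then obtain i where i: "i \<in> I" "x \<in> A i" by blast
    then have xt: "x \<in> topspace X" using fclosed_subset[OF fc[OF i(1)]] by blast
    have "x \<in> U i" using AU i by blast
    then show "x \<in> {x \<in> topspace X. h x = 0}" using hsel[OF i(1)] hi0[OF i(1) xt] i xt by auto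
  next
    fix x assume x: "x \<in> {x \<in> topspace X. h x = 0}"
    then have "\<exists>i\<in>I. x \<in> U i" unfolding h_def by (auto split: if_splits)
    then obtain i where i: "i \<in> I" "x \<in> U i" by blast
    then show "x \<in> (\<Union>i\<in>I. A i)" using hsel[OF i] hi0[OF i(1)] x by auto
  qed
  ultimately show ?thesis by (auto simp: fclosed_iff)
qed

lemma sigma_sfdI:
  fixes F :: "'c::countable \<Rightarrow> 'a set set"
  assumes "\<And>c. sfd X (F c) id"
  shows "sigma_sfd X (\<Union>c. F c)"
proof -
  have "(\<Union>c. F c) = (\<Union>n. F (from_nat n))"
  proof (intro equalityI subsetI)
    fix x assume "x \<in> (\<Union>c. F c)"
    then obtain c where "x \<in> F c" by blast
    then have "x \<in> F (from_nat (to_nat c))" by simp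
    then show "x \<in> (\<Union>n. F (from_nat n))" by blast
  qed blast
  then show ?thesis unfolding sigma_sfd_def using assms by (intro exI[of _ "\<lambda>n. F (from_nat n)"]) simp
qed



definition sdist :: "('b \<Rightarrow> 'b \<Rightarrow> real) \<Rightarrow> 'b set \<Rightarrow> 'b \<Rightarrow> real" where
  "sdist d S y = (if S = {} then 1 else Inf (d y ` S))"

context Metric_space begin

lemma sdist_bdd: "S \<subseteq> M \<Longrightarrow> y \<in> M \<Longrightarrow> bdd_below (d y ` S)"
  by (rule bdd_belowI[of _ 0]) auto

lemma sdist_le: "S \<subseteq> M \<Longrightarrow> y \<in> M \<Longrightarrow> p \<in> S \<Longrightarrow> sdist d S y \<le> d y p"
  unfolding sdist_def using sdist_bdd by (auto intro!: cInf_lower)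

lemma sdist_less_iff:
  assumes "S \<subseteq> M" "y \<in> M" "t \<le> 1"
  shows "sdist d S y < t \<longleftrightarrow> (\<exists>p\<in>S. d y p < t)"
proof (cases "S = {}")
  case True then show ?thesis using assms by (simp add: sdist_def)
next
  case False
  then show ?thesis unfolding sdist_def using cInf_less_iff[of "d y ` S" t] sdist_bdd[OF assms(1,2)]
    by auto
qed

lemma sdist_lip:
  assumes S: "S \<subseteq> M" and y: "y \<in> M" and z: "z \<in> M"
  shows "sdist d S y \<le> d y z + sdist d S z"
proof (cases "S = {}")
  case True then show ?thesis by (simp add: sdist_def)
next
  case False
  have "sdist d S y - d y z \<le> Inf (d z ` S)"
  proof (rule cInf_greatest)
    show "d z ` S \<noteq> {}" using False by auto
    fix v assume "v \<in> d z ` S"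
    then obtain p where p: "p \<in> S" "v = d z p" by auto
    have "sdist d S y \<le> d y p" by (rule sdist_le[OF S y p(1)])
    also have "\<dots> \<le> d y z + d z p" using S p y z triangle by blast
    finally show "sdist d S y - d y z \<le> v" using p by simp
  qed
  then show ?thesis using False by (simp add: sdist_def)
qed

lemma sdist_cont:
  assumes S: "S \<subseteq> M"
  shows "continuous_map mtopology euclideanreal (sdist d S)"
proof -
  have "continuous_map mtopology Met_TC.mtopology (sdist d S)"
    unfolding metric_continuous_map[OF Met_TC.Metric_space_axioms]
  proof (intro conjI ballI allI impI)
    fix a and \<epsilon>::real assume a: "a \<in> M" and e: "\<epsilon> > 0"
    show "\<exists>\<delta>>0. \<forall>x. x \<in> M \<and> d a x < \<delta> \<longrightarrow> dist (sdist d S a) (sdist d S x) < \<epsilon>"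
    proof (intro exI[of _ \<epsilon>] conjI allI impI)
      fix x assume x: "x \<in> M \<and> d a x < \<epsilon>"
      have "sdist d S a \<le> d a x + sdist d S x" using sdist_lip S a x by blast
      moreover have "sdist d S x \<le> d x a + sdist d S a" using sdist_lip S a x by blast
      ultimately have "sdist d S a - sdist d S x < \<epsilon>" "sdist d S x - sdist d S a < \<epsilon>"
        using x commute[of a x] by linarith+
      then show "dist (sdist d S a) (sdist d S x) < \<epsilon>" by (simp add: dist_real_def abs_less_iff)
    qed (use e in auto)
  qed auto
  then show ?thesis by simp
qed

lemma stone_base:
  obtains V :: "nat \<Rightarrow> nat \<Rightarrow> 'a \<Rightarrow> 'a set" where
     "\<And>n k a. V n k a \<subseteq> M" "\<And>n k a. openin mtopology (V n k a)"
     "\<And>n k a b p q. a \<noteq> b \<Longrightarrow> p \<in> V n k a \<Longrightarrow> q \<in> V n k b \<Longrightarrow> (1/2)^k \<le> d p q"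
     "\<And>W y. openin mtopology W \<Longrightarrow> y \<in> W \<Longrightarrow>
        (\<exists>n k a. y \<in> V n k a \<and> (\<forall>z\<in>M. \<forall>p\<in>V n k a. d z p < (1/2)^k \<longrightarrow> z \<in> W))"
proof -
  obtain r :: "'a rel" where wor: "Well_order r \<and> Field r = UNIV" using well_ordering[where 'a='a] by (rule exE)
  have wo: "Well_order r" using wor by (rule conjunct1)
  have fr: "Field r = UNIV" using wor by (rule conjunct2)
  interpret W: wo_rel r using wo by (simp add: wo_rel_def)
  define C where "C n x = {a \<in> M. x \<in> mball a ((1/2::real)^n)}" for n x
  define \<alpha> where "\<alpha> n x = W.minim (C n x)" for n x
  define S where "S n k a = {x \<in> M. \<alpha> n x = a \<and> mball x (3*(1/2::real)^k) \<subseteq> mball a ((1/2)^n)}" for n k a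
  define V where "V n k a = (\<Union>x\<in>S n k a. mball x ((1/2::real)^k))" for n k a
  have \<alpha>C: "\<alpha> n x \<in> C n x" if "x \<in> M" for n x
  proof -
    have "x \<in> C n x" using that by (simp add: C_def)
    then show ?thesis unfolding \<alpha>_def using fr by (intro W.minim_in) auto
  qed
  have \<alpha>min: "(\<alpha> n x, a) \<in> r" if "a \<in> C n x" for n x a
    unfolding \<alpha>_def using fr that by (intro W.minim_least) auto
  have key: "3*(1/2)^k \<le> d x y" if ab: "a \<noteq> b" and x: "x \<in> S n k a" and y: "y \<in> S n k b" and r: "(a,b) \<in> r"
    for a b x y n k
  proof (rule ccontr)
    assume "\<not> 3*(1/2)^k \<le> d x y"
    then have "y \<in> mball x (3*(1/2)^k)" using x y by (auto simp: S_def)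
    then have "y \<in> mball a ((1/2)^n)" using x by (auto simp: S_def)
    then have "a \<in> C n y" by (auto simp: C_def)
    then have "(b, a) \<in> r" using \<alpha>min y by (auto simp: S_def)
    then show False using r ab W.ANTISYM by (auto simp: antisym_def)
  qed
  have sep: "(1/2)^k \<le> d p q" if ab: "a \<noteq> b" and p: "p \<in> V n k a" and q: "q \<in> V n k b" for n k a b p q
  proof -
    obtain x where x: "x \<in> S n k a" "p \<in> mball x ((1/2)^k)" using p by (auto simp: V_def)
    obtain y where y: "y \<in> S n k b" "q \<in> mball y ((1/2)^k)" using q by (auto simp: V_def)
    have "(a,b) \<in> r \<or> (b,a) \<in> r" using W.TOTALS fr by blast
    then have "3*(1/2)^k \<le> d x y"
      using key[OF ab x(1) y(1)] key[of b a y n k x] ab x(1) y(1) commute[of x y] by auto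
    moreover have "d x y \<le> d x p + d p q + d q y"
    proof -
      have M: "x \<in> M" "p \<in> M" "q \<in> M" "y \<in> M" using x y by (auto simp: S_def)
      have "d x y \<le> d x p + d p y" using M triangle by blast
      moreover have "d p y \<le> d p q + d q y" using M triangle by blast
      ultimately show ?thesis by linarith
    qed
    moreover have "d x p < (1/2)^k" "d q y < (1/2)^k" using x y commute by auto
    ultimately show ?thesis by linarith
  qed
  have VM: "V n k a \<subseteq> M" for n k a by (auto simp: V_def)
  have Vo: "openin mtopology (V n k a)" for n k a unfolding V_def by (intro openin_Union) auto
  have cover: "\<exists>n k a. y \<in> V n k a \<and> (\<forall>z\<in>M. \<forall>p\<in>V n k a. d z p < (1/2)^k \<longrightarrow> z \<in> W)"
    if W: "openin mtopology W" and y: "y \<in> W" for W y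
  proof -
    obtain \<epsilon> where e: "\<epsilon> > 0" "mball y \<epsilon> \<subseteq> W" using W y by (auto simp: openin_mtopology)
    have yM: "y \<in> M" using W y openin_mtopology by blast
    obtain n where n: "(1/2::real)^n < \<epsilon>/3" using real_arch_pow_inv[of "\<epsilon>/3" "1/2"] e by auto
    define R where "R = (1/2::real)^n"
    define a where "a = \<alpha> n y"
    have aC: "a \<in> M" "d a y < R" using \<alpha>C[OF yM, of n] by (auto simp: a_def C_def R_def)
    have Rpos: "R > 0" by (simp add: R_def)
    define m where "m = min (R - d a y) R"
    have m: "m \<le> R - d a y" "m \<le> R" "m > 0" using aC Rpos unfolding m_def by auto
    obtain k where k0: "(1/2::real)^k < m / 3"
      using real_arch_pow_inv[of "m / 3" "1/2"] m by auto
    define sk where "sk = (1/2::real)^k"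
    have k0': "sk < m / 3" using k0 by (simp add: sk_def)
    have k03: "3 * sk < m" using mult_strict_left_mono[OF k0', of 3] by simp
    have k1: "3 * sk < R - d a y" using k03 m by linarith
    have k2: "3 * sk < R" using k03 m by linarith
    note k = k1 k2
    have spos: "sk > 0" by (simp add: sk_def)
    have yball: "mball y (3 * sk) \<subseteq> mball a R"
    proof
      fix z assume z: "z \<in> mball y (3 * sk)"
      have zM: "z \<in> M" "d y z < 3 * sk" using z by auto
      have "d a z \<le> d a y + d y z" using aC yM zM triangle by blast
      then have "d a z < R" using zM(2) k(1) by linarith
      then show "z \<in> mball a R" using aC zM by simp
    qed
    have yS: "y \<in> S n k a" using yM yball by (simp add: S_def a_def sk_def R_def)
    have yV: "y \<in> V n k a" unfolding V_def using yS yM by (auto intro!: bexI[of _ y])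
    have "z \<in> W" if z: "z \<in> M" and p: "p \<in> V n k a" and dz: "d z p < (1/2)^k" for z p
    proof -
      obtain x where x: "x \<in> S n k a" "p \<in> mball x ((1/2)^k)" using p by (auto simp: V_def)
      have "mball x ((1/2)^k) \<subseteq> mball x (3*(1/2)^k)" by (rule mball_subset_concentric) auto
      also have "\<dots> \<subseteq> mball a R" using x by (simp add: S_def R_def)
      finally have pa: "d a p < R" using x by auto
      have pM: "p \<in> M" using x by auto
      have "d y z \<le> d y a + d a z" using yM aC z triangle by blast
      moreover have "d a z \<le> d a p + d p z" using pM aC z triangle by blast
      ultimately have "d y z \<le> d y a + d a p + d p z" by linarith
      moreover have "d y a < R" using aC commute by (simp add: commute)
      moreover have "d p z < sk" using dz commute sk_def by (simp add: commute)
      moreover have "sk < R" using k(2) spos by linarith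
      ultimately have "d y z < \<epsilon>" using pa n unfolding R_def by linarith
      then show ?thesis using e z yM by auto
    qed
    then show ?thesis using yV by blast
  qed
  show ?thesis
    by (rule that[of V]) (rule VM, rule Vo, rule sep, assumption+, rule cover, assumption+)
qed

end


lemma sigma_sfdE:
  assumes "sigma_sfd X \<B>"
  obtains \<A> :: "nat \<Rightarrow> 'a set set" where "\<And>n. sfd X (\<A> n) id" "\<B> = (\<Union>n. \<A> n)"
proof -
  obtain A :: "nat \<Rightarrow> 'a set set" where h: "(\<forall>n. sfd X (A n) id) \<and> \<B> = (\<Union>n. A n)"
    using assms unfolding sigma_sfd_def by (rule exE)
  show ?thesis
  proof (rule that)
    show "\<And>n. sfd X (A n) id" using h by simp
    show "\<B> = (\<Union>n. A n)" using h by (rule conjunct2)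
  qed
qed

lemma star_imp_K1:
  assumes "Sigma_f_star_0 X Y f"
  shows "K1 X Y f"
proof -
  obtain \<B> where h: "sigma_sfd X \<B> \<and> base_for X Y f \<B> \<and> (\<forall>B \<in> \<B>. fclosed X B)"
    using assms unfolding Sigma_f_star_0_def by (rule exE)
  have sB: "sigma_sfd X \<B>" and bB: "base_for X Y f \<B>" and fc: "\<And>B. B \<in> \<B> \<Longrightarrow> fclosed X B"
    using h by auto
  obtain \<A> where sA: "\<And>n::nat. sfd X (\<A> n) id" and Beq: "\<B> = (\<Union>n. \<A> n)"
    using sigma_sfdE[OF sB] by metis
  show ?thesis unfolding K1_def
  proof (intro allI impI)
    fix V assume V: "openin Y V"
    obtain \<C> where C: "\<C> \<subseteq> \<B>" and P: "{x \<in> topspace X. f x \<in> V} = \<Union>\<C>"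
      using bB V unfolding base_for_def by blast
    define F where "F n = (\<Union>i\<in>\<C> \<inter> \<A> n. id i)" for n
    have "fclosed X (F n)" for n
      unfolding F_def
    proof (rule fclosed_Union_sfd)
      show "sfd X (\<C> \<inter> \<A> n) id" using sfd_mono[OF sA] by blast
      fix i assume "i \<in> \<C> \<inter> \<A> n"
      then show "fclosed X (id i)" using fc C by auto
    qed
    moreover have "{x \<in> topspace X. f x \<in> V} = (\<Union>n. F n)"
      unfolding P F_def
    proof (intro equalityI subsetI)
      fix x assume "x \<in> \<Union>\<C>"
      then obtain Q where Q: "Q \<in> \<C>" "x \<in> Q" by blast
      then obtain n where "Q \<in> \<A> n" using C Beq by blast
      then show "x \<in> (\<Union>n. \<Union>i\<in>\<C> \<inter> \<A> n. id i)" using Q by auto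
    qed auto
    ultimately show "fFsigma X {x \<in> topspace X. f x \<in> V}" unfolding fFsigma_def by (intro exI[of _ F]) simp
  qed
qed

lemma star_imp_Sigma_f: "Sigma_f_star_0 X Y f \<Longrightarrow> Sigma_f X Y f"
  unfolding Sigma_f_star_0_def Sigma_f_def by blast

context Metric_space begin

lemma fclosed_sdist_le:
  assumes "S \<subseteq> M"
  shows "fclosed mtopology {z \<in> M. sdist d S z \<le> c}"
proof -
  have "continuous_map mtopology euclideanreal (\<lambda>z. max 0 (sdist d S z - c))"
    using sdist_cont[OF assms] by (intro continuous_intros) auto
  moreover have "{z \<in> M. sdist d S z \<le> c} = {z \<in> topspace mtopology. max 0 (sdist d S z - c) = 0}"
    by auto
  ultimately show ?thesis unfolding fclosed_iff by blast
qed

lemma fopen_sdist_less: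
  assumes "S \<subseteq> M"
  shows "fopen mtopology {z \<in> M. sdist d S z < c}"
proof -
  have "continuous_map mtopology euclideanreal (\<lambda>z. max 0 (c - sdist d S z))"
    using sdist_cont[OF assms] by (intro continuous_intros) auto
  moreover have "{z \<in> M. sdist d S z < c} = {z \<in> topspace mtopology. max 0 (c - sdist d S z) > 0}"
    by auto
  ultimately show ?thesis unfolding fopen_iff by (intro exI[of _ "\<lambda>z. max 0 (c - sdist d S z)"]) auto
qed

lemma mid_direction:
  assumes K: "K1 X mtopology f" and S: "Sigma_f X mtopology f" and fM: "f \<in> topspace X \<rightarrow> M"
  shows "Sigma_f_star_0 X mtopology f"
proof -
  obtain \<B> where sB: "sigma_sfd X \<B>" and bB: "base_for X mtopology f \<B>"
    using S unfolding Sigma_f_def by blast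
  obtain \<A> where sA: "\<And>n::nat. sfd X (\<A> n) id" and Beq: "\<B> = (\<Union>n. \<A> n)"
    using sigma_sfdE[OF sB] by metis
  have "\<forall>n. \<exists>U. discrete_family X (\<A> n) U \<and> (\<forall>i\<in>\<A> n. fopen X (U i) \<and> X closure_of (id i) \<subseteq> U i)"
    using sA unfolding sfd_def by blast
  then obtain U where U: "\<forall>n. discrete_family X (\<A> n) (U n) \<and> (\<forall>i\<in>\<A> n. fopen X (U n i) \<and> X closure_of (id i) \<subseteq> U n i)"
    by (rule choice[THEN exE])
  have dU: "\<And>n. discrete_family X (\<A> n) (U n)" using U by blast
  have fU: "\<And>n B. B \<in> \<A> n \<Longrightarrow> fopen X (U n B)" using U by blast
  have cU: "\<And>n B. B \<in> \<A> n \<Longrightarrow> X closure_of B \<subseteq> U n B" using U by auto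
  have "\<forall>n. \<forall>B\<in>\<A> n. \<exists>\<psi>. continuous_map X euclideanreal \<psi> \<and> (\<forall>x. \<psi> x \<ge> 0) \<and> U n B = {x \<in> topspace X. \<psi> x > 0}"
    using fU by (auto simp: fopen_iff)
  then obtain \<psi> where c\<psi>: "\<And>n B. B \<in> \<A> n \<Longrightarrow> continuous_map X euclideanreal (\<psi> n B)"
    and p\<psi>: "\<And>n B x. B \<in> \<A> n \<Longrightarrow> \<psi> n B x \<ge> 0"
    and U\<psi>: "\<And>n B. B \<in> \<A> n \<Longrightarrow> U n B = {x \<in> topspace X. \<psi> n B x > 0}"
    by metis
  define fB where "fB B = f ` (B \<inter> topspace X)" for B
  have fBM: "fB B \<subseteq> M" for B using fM by (auto simp: fB_def)
  define Ob where "Ob B j = {y \<in> M. sdist d (fB B) y < inverse (real (Suc j))}" for B j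
  have Oo: "openin mtopology (Ob B j)" for B j
    using fopen_openin[OF fopen_sdist_less[OF fBM]] by (simp add: Ob_def)
  have "\<forall>p. \<exists>F. (\<forall>k::nat. fclosed X (F k)) \<and> {x \<in> topspace X. f x \<in> Ob (fst p) (snd p)} = (\<Union>k. F k)"
  proof (intro allI)
    fix p
    have "fFsigma X {x \<in> topspace X. f x \<in> Ob (fst p) (snd p)}" using K Oo unfolding K1_def by blast
    then show "\<exists>F. (\<forall>k::nat. fclosed X (F k)) \<and> {x \<in> topspace X. f x \<in> Ob (fst p) (snd p)} = (\<Union>k. F k)"
      unfolding fFsigma_def .
  qed
  then obtain Fp where Fp: "\<forall>p. (\<forall>k::nat. fclosed X (Fp p k)) \<and> {x \<in> topspace X. f x \<in> Ob (fst p) (snd p)} = (\<Union>k. Fp p k)"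
    by (rule choice[THEN exE])
  define F where "F B j = Fp (B, j)" for B j
  have Ffc: "\<And>B j k. fclosed X (F B j k)" using Fp unfolding F_def by simp
  have Feq: "\<And>B j. {x \<in> topspace X. f x \<in> Ob B j} = (\<Union>k. F B j k)"
  proof -
    fix B j show "{x \<in> topspace X. f x \<in> Ob B j} = (\<Union>k. F B j k)"
      using Fp[rule_format, of "(B, j)"] unfolding F_def by simp
  qed
  have le1: "inverse (real (Suc j)) \<le> 1" for j by (simp add: inverse_le_1_iff)
  define Z where "Z n B i = {x \<in> topspace X. \<psi> n B x \<ge> inverse (real (Suc i))}" for n B i
  define U' where "U' n B i = {x \<in> topspace X. \<psi> n B x > inverse (real (Suc i)) / 2}" for n B i
  define E where "E n j k i B = F B j k \<inter> Z n B i" for n j k i B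
  define G where "G c = (case c of (n, j, k, i) \<Rightarrow> (E n j k i) ` \<A> n)" for c :: "nat \<times> nat \<times> nat \<times> nat"
  define \<B>' where "\<B>' = (\<Union>c. G c)"
  have Zfc: "fclosed X (Z n B i)" if "B \<in> \<A> n" for n B i
  proof -
    have "continuous_map X euclideanreal (\<lambda>x. max 0 (inverse (real (Suc i)) - \<psi> n B x))"
      using c\<psi>[OF that] by (intro continuous_intros) auto
    moreover have "Z n B i = {x \<in> topspace X. max 0 (inverse (real (Suc i)) - \<psi> n B x) = 0}"
      unfolding Z_def by auto
    ultimately show ?thesis unfolding fclosed_iff by blast
  qed
  have Efc: "fclosed X (E n j k i B)" if "B \<in> \<A> n" for n j k i B
    unfolding E_def using Ffc Zfc[OF that] by (rule fclosed_Int)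
  have sfdG: "sfd X (G c) id" for c
  proof -
    obtain n j k i where c: "c = (n, j, k, i)" by (cases c) auto
    have "sfd X ((E n j k i) ` \<A> n) id"
    proof (rule sfd_imageI[where U = "\<lambda>B. U' n B i"])
      fix B assume B: "B \<in> \<A> n"
      have "continuous_map X euclideanreal (\<lambda>x. max 0 (\<psi> n B x - inverse (real (Suc i)) / 2))"
        using c\<psi>[OF B] by (intro continuous_intros) auto
      moreover have "U' n B i = {x \<in> topspace X. max 0 (\<psi> n B x - inverse (real (Suc i)) / 2) > 0}"
        unfolding U'_def by auto
      ultimately show "fopen X (U' n B i)" unfolding fopen_iff
        by (intro exI[of _ "\<lambda>x. max 0 (\<psi> n B x - inverse (real (Suc i)) / 2)"]) auto
      have "X closure_of (E n j k i B) = E n j k i B"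
        using fclosed_closedin[OF Efc[OF B]] by (simp add: closure_of_eq)
      moreover have "Z n B i \<subseteq> U' n B i"
      proof
        fix x assume "x \<in> Z n B i"
        then have xt: "x \<in> topspace X" and le: "inverse (real (Suc i)) \<le> \<psi> n B x" by (auto simp: Z_def)
        have "inverse (real (Suc i)) / 2 < inverse (real (Suc i))" by simp
        then have "inverse (real (Suc i)) / 2 < \<psi> n B x" using le by linarith
        then show "x \<in> U' n B i" using xt unfolding U'_def by blast
      qed
      ultimately show "X closure_of (E n j k i B) \<subseteq> U' n B i" unfolding E_def by auto
    next
      fix x assume x: "x \<in> topspace X"
      obtain N where N: "openin X N" "x \<in> N"
        and u: "\<And>a b. a \<in> \<A> n \<Longrightarrow> b \<in> \<A> n \<Longrightarrow> U n a \<inter> N \<noteq> {} \<Longrightarrow> U n b \<inter> N \<noteq> {} \<Longrightarrow> a = b"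
        using discrete_familyE[OF dU x] by metis
      have sub: "U' n B i \<subseteq> U n B" if "B \<in> \<A> n" for B
      proof
        fix y assume "y \<in> U' n B i"
        then have yt: "y \<in> topspace X" and lt: "inverse (real (Suc i)) / 2 < \<psi> n B y" by (auto simp: U'_def)
        have "0 < inverse (real (Suc i)) / 2" by simp
        then have "0 < \<psi> n B y" using lt by linarith
        then show "y \<in> U n B" using yt unfolding U\<psi>[OF that] by blast
      qed
      show "\<exists>N. openin X N \<and> x \<in> N \<and> (\<forall>a\<in>\<A> n. \<forall>b\<in>\<A> n. U' n a i \<inter> N \<noteq> {} \<and> U' n b i \<inter> N \<noteq> {} \<longrightarrow> a = b)"
      proof (intro exI[of _ N] conjI ballI impI)
        fix a b assume a: "a \<in> \<A> n" and b: "b \<in> \<A> n" and m: "U' n a i \<inter> N \<noteq> {} \<and> U' n b i \<inter> N \<noteq> {}"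
        have "U n a \<inter> N \<noteq> {}" using m sub[OF a] by blast
        moreover have "U n b \<inter> N \<noteq> {}" using m sub[OF b] by blast
        ultimately show "a = b" using u a b by blast
      qed (use N in auto)
    qed
    then show ?thesis using c by (simp add: G_def)
  qed
  have sB': "sigma_sfd X \<B>'" unfolding \<B>'_def by (rule sigma_sfdI[OF sfdG])
  have fcB': "\<forall>E\<in>\<B>'. fclosed X E"
    unfolding \<B>'_def G_def using Efc by (auto split: prod.splits)
  have bB': "base_for X mtopology f \<B>'"
    unfolding base_for_def
  proof (intro allI impI)
    fix W assume W: "openin mtopology W"
    define P where "P = {x \<in> topspace X. f x \<in> W}"
    have "P \<subseteq> \<Union>{E \<in> \<B>'. E \<subseteq> P}"
    proof
      fix x assume xP: "x \<in> P"
      then have xt: "x \<in> topspace X" and fxW: "f x \<in> W" by (auto simp: P_def)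
      have fxM: "f x \<in> M" using fM xt by auto
      obtain \<epsilon> where e: "\<epsilon> > 0" "mball (f x) \<epsilon> \<subseteq> W" using W fxW by (auto simp: openin_mtopology)
      obtain j where j: "inverse (real (Suc j)) < \<epsilon>/4" using reals_Archimedean[of "\<epsilon>/4"] e by auto
      have ex: "\<exists>\<C>0. \<C>0 \<subseteq> \<B> \<and> {x' \<in> topspace X. f x' \<in> mball (f x) (\<epsilon>/4)} = \<Union>\<C>0"
        using bB[unfolded base_for_def, rule_format, of "mball (f x) (\<epsilon>/4)"] by simp
      obtain \<C>0 where C0P: "\<C>0 \<subseteq> \<B> \<and> {x' \<in> topspace X. f x' \<in> mball (f x) (\<epsilon>/4)} = \<Union>\<C>0"
        using ex by (rule exE)
      have C0: "\<C>0 \<subseteq> \<B>" using C0P by (rule conjunct1)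
      have P0: "{x' \<in> topspace X. f x' \<in> mball (f x) (\<epsilon>/4)} = \<Union>\<C>0" using C0P by (rule conjunct2)
      have "x \<in> \<Union>\<C>0" using P0 xt fxM e by auto
      then obtain B where B: "B \<in> \<C>0" "x \<in> B" by blast
      then obtain n where n: "B \<in> \<A> n" using C0 Beq by blast
      have Bsub: "B \<subseteq> {x' \<in> topspace X. f x' \<in> mball (f x) (\<epsilon>/4)}" using P0 B by blast
      have "x \<in> X closure_of B" using closure_of_subset[of B X] Bsub B by blast
      then have "x \<in> U n B" using cU[OF n] by blast
      then have "\<psi> n B x > 0" using U\<psi>[OF n] by blast
      then obtain i where i: "inverse (real (Suc i)) < \<psi> n B x" using reals_Archimedean by blast
      have xZ: "x \<in> Z n B i" using i xt by (auto simp: Z_def)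
      have "f x \<in> fB B" using B xt by (auto simp: fB_def)
      moreover have "d (f x) (f x) < inverse (real (Suc j))" using fxM by simp
      ultimately have "\<exists>p\<in>fB B. d (f x) p < inverse (real (Suc j))" by blast
      then have "sdist d (fB B) (f x) < inverse (real (Suc j))"
        using sdist_less_iff[OF fBM fxM le1] by blast
      then have "x \<in> {x \<in> topspace X. f x \<in> Ob B j}" using xt fxM by (auto simp: Ob_def)
      then obtain k where k: "x \<in> F B j k" using Feq[of B j] by blast
      have xE: "x \<in> E n j k i B" using k xZ by (simp add: E_def)
      have EB: "E n j k i B \<in> \<B>'" unfolding \<B>'_def G_def using n
        by (intro UN_I[of "(n, j, k, i)"]) auto
      have "E n j k i B \<subseteq> P"
      proof
        fix z assume z: "z \<in> E n j k i B"
        then have "z \<in> {x \<in> topspace X. f x \<in> Ob B j}" using Feq[of B j] by (auto simp: E_def)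
        then have zt: "z \<in> topspace X" and fzO: "f z \<in> Ob B j" by auto
        have fzM: "f z \<in> M" using fM zt by auto
        have "sdist d (fB B) (f z) < inverse (real (Suc j))" using fzO by (simp add: Ob_def)
        then obtain p where p: "p \<in> fB B" "d (f z) p < inverse (real (Suc j))"
          using sdist_less_iff[OF fBM fzM le1] by blast
        then obtain b where b: "b \<in> B" "b \<in> topspace X" "p = f b" by (auto simp: fB_def)
        have "f b \<in> mball (f x) (\<epsilon>/4)" using Bsub b by blast
        then have db: "d (f x) (f b) < \<epsilon>/4" and fbM: "f b \<in> M" by auto
        have "d (f x) (f z) \<le> d (f x) (f b) + d (f b) (f z)" using fxM fbM fzM triangle by blast
        moreover have "d (f b) (f z) = d (f z) (f b)" by (rule commute)
        moreover have "d (f z) (f b) < inverse (real (Suc j))" using p(2) b(3) by simp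
        ultimately have "d (f x) (f z) < \<epsilon>" using db j e(1) by linarith
        then have "f z \<in> W" using e fxM fzM by auto
        then show "z \<in> P" using zt by (simp add: P_def)
      qed
      then show "x \<in> \<Union>{E \<in> \<B>'. E \<subseteq> P}" using xE EB by blast
    qed
    then have eqP: "P = \<Union>{E \<in> \<B>'. E \<subseteq> P}" by blast
    have Peq: "{x \<in> topspace X. f x \<in> W} = P" by (simp add: P_def)
    show "\<exists>\<C>\<subseteq>\<B>'. {x \<in> topspace X. f x \<in> W} = \<Union>\<C>"
    proof (rule exI[of _ "{E \<in> \<B>'. E \<subseteq> P}"], rule conjI)
      show "{E \<in> \<B>'. E \<subseteq> P} \<subseteq> \<B>'" by blast
      show "{x \<in> topspace X. f x \<in> W} = \<Union>{E \<in> \<B>'. E \<subseteq> P}" using Peq eqP by (rule trans)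
    qed
  qed
  show ?thesis unfolding Sigma_f_star_0_def using sB' bB' fcB' by (intro exI[of _ \<B>']) simp
qed

end


context Metric_space begin

lemma baire_direction:
  assumes B: "Baire1 X mtopology f" and fM: "f \<in> topspace X \<rightarrow> M"
  shows "Sigma_f_star_0 X mtopology f"
proof -
  obtain g where gex: "(\<forall>n. continuous_map X mtopology (g n)) \<and>
      (\<forall>x \<in> topspace X. limitin mtopology (\<lambda>n. g n x) (f x) sequentially)"
    using B unfolding Baire1_def by (rule exE)
  have gc: "\<And>n. continuous_map X mtopology (g n)" using gex by blast
  have lim: "\<And>x. x \<in> topspace X \<Longrightarrow> limitin mtopology (\<lambda>n. g n x) (f x) sequentially" using gex by blast
  have gM: "g n x \<in> M" if "x \<in> topspace X" for n x
    using gc[of n] that by (auto simp: continuous_map_def)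
  obtain V :: "nat \<Rightarrow> nat \<Rightarrow> 'a \<Rightarrow> 'a set" where
     VM: "\<And>n k a. V n k a \<subseteq> M" and Vo: "\<And>n k a. openin mtopology (V n k a)"
     and sep: "\<And>n k a b p q. a \<noteq> b \<Longrightarrow> p \<in> V n k a \<Longrightarrow> q \<in> V n k b \<Longrightarrow> (1/2)^k \<le> d p q"
     and cover: "\<And>W y. openin mtopology W \<Longrightarrow> y \<in> W \<Longrightarrow>
        (\<exists>n k a. y \<in> V n k a \<and> (\<forall>z\<in>M. \<forall>p\<in>V n k a. d z p < (1/2)^k \<longrightarrow> z \<in> W))"
    by (rule stone_base) (rule that)
  define \<delta> where "\<delta> k = (1/2::real)^k / 8" for k
  have \<delta>pos: "\<delta> k > 0" for k by (simp add: \<delta>_def)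
  have \<delta>le: "2 * \<delta> k \<le> 1" for k
  proof -
    have "(1/2::real)^k \<le> 1" by (simp add: power_le_one)
    then show ?thesis by (simp add: \<delta>_def)
  qed
  have \<delta>s: "8 * \<delta> k = (1/2)^k" for k by (simp add: \<delta>_def)
  define Cs where "Cs n k a = {z \<in> M. sdist d (V n k a) z \<le> \<delta> k}" for n k a
  define Os where "Os n k a = {z \<in> M. sdist d (V n k a) z < 2 * \<delta> k}" for n k a
  define E where "E n k j a = {x \<in> topspace X. \<forall>i\<ge>j. g i x \<in> Cs n k a}" for n k j a
  define Ux where "Ux n k j a = {x \<in> topspace X. g j x \<in> Os n k a}" for n k j a
  define G where "G c = (case c of (n, k, j) \<Rightarrow> (E n k j) ` UNIV)" for c :: "nat \<times> nat \<times> nat"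
  define \<B> where "\<B> = (\<Union>c. G c)"
  have Csfc: "fclosed mtopology (Cs n k a)" for n k a
    unfolding Cs_def by (rule fclosed_sdist_le[OF VM])
  have Osfo: "fopen mtopology (Os n k a)" for n k a
    unfolding Os_def by (rule fopen_sdist_less[OF VM])
  have Efc: "fclosed X (E n k j a)" for n k j a
  proof -
    have eq: "E n k j a = (\<Inter>i. {x \<in> topspace X. g (j + i) x \<in> Cs n k a})"
    proof (intro equalityI subsetI)
      fix x assume "x \<in> E n k j a"
      then show "x \<in> (\<Inter>i. {x \<in> topspace X. g (j + i) x \<in> Cs n k a})" by (auto simp: E_def)
    next
      fix x assume x: "x \<in> (\<Inter>i. {x \<in> topspace X. g (j + i) x \<in> Cs n k a})"
      then have xt: "x \<in> topspace X" by auto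
      have "g i x \<in> Cs n k a" if "i \<ge> j" for i
      proof -
        have "g (j + (i - j)) x \<in> Cs n k a" using x by blast
        then show ?thesis using that by simp
      qed
      then show "x \<in> E n k j a" using xt by (simp add: E_def)
    qed
    show ?thesis unfolding eq
      by (rule fclosed_INT_nat, rule fclosed_preimage[OF gc Csfc])
  qed
  have CsOs: "Cs n k a \<subseteq> Os n k a" for n k a
  proof
    fix z assume "z \<in> Cs n k a"
    moreover have "\<delta> k < 2 * \<delta> k" using \<delta>pos[of k] by linarith
    ultimately show "z \<in> Os n k a" unfolding Cs_def Os_def by auto
  qed
  have sfdG: "sfd X (G c) id" for c
  proof -
    obtain n k j where c: "c = (n, k, j)" by (cases c) auto
    have "sfd X ((E n k j) ` UNIV) id"
    proof (rule sfd_imageI[where U = "Ux n k j"])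
      fix a :: 'a
      show "fopen X (Ux n k j a)" unfolding Ux_def by (rule fopen_preimage[OF gc Osfo])
      have "X closure_of (E n k j a) = E n k j a"
        using fclosed_closedin[OF Efc] by (simp add: closure_of_eq)
      moreover have "E n k j a \<subseteq> Ux n k j a"
      proof
        fix x assume "x \<in> E n k j a"
        then have "x \<in> topspace X" "g j x \<in> Cs n k a" by (auto simp: E_def)
        then show "x \<in> Ux n k j a" using CsOs by (auto simp: Ux_def)
      qed
      ultimately show "X closure_of (E n k j a) \<subseteq> Ux n k j a" by simp
    next
      fix x assume x: "x \<in> topspace X"
      define w where "w = g j x"
      have wM: "w \<in> M" using gM[OF x] by (simp add: w_def)
      define N where "N = {x' \<in> topspace X. g j x' \<in> mball w (\<delta> k / 2)}"
      have No: "openin X N" unfolding N_def by (rule openin_continuous_map_preimage[OF gc openin_mball])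
      have xN: "x \<in> N" using x wM \<delta>pos[of k] by (simp add: N_def w_def)
      have near: "\<exists>p\<in>V n k a. d w p < 5/2 * \<delta> k" if ne: "Ux n k j a \<inter> N \<noteq> {}" for a
      proof -
        obtain x1 where x1: "x1 \<in> Ux n k j a" "x1 \<in> N" using ne by blast
        then have x1t: "x1 \<in> topspace X" and z1O: "g j x1 \<in> Os n k a" and z1b: "g j x1 \<in> mball w (\<delta> k / 2)"
          by (auto simp: Ux_def N_def)
        have z1M: "g j x1 \<in> M" using gM[OF x1t] .
        have "sdist d (V n k a) (g j x1) < 2 * \<delta> k" using z1O by (simp add: Os_def)
        then obtain p where p: "p \<in> V n k a" "d (g j x1) p < 2 * \<delta> k"
          using sdist_less_iff[OF VM z1M \<delta>le] by blast
        have pM: "p \<in> M" using p VM by blast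
        have "d w p \<le> d w (g j x1) + d (g j x1) p" using wM z1M pM triangle by blast
        moreover have "d w (g j x1) < \<delta> k / 2" using z1b by simp
        ultimately have "d w p < 5/2 * \<delta> k" using p(2) by linarith
        then show ?thesis using p(1) by blast
      qed
      show "\<exists>N. openin X N \<and> x \<in> N \<and> (\<forall>a\<in>UNIV. \<forall>b\<in>UNIV. Ux n k j a \<inter> N \<noteq> {} \<and> Ux n k j b \<inter> N \<noteq> {} \<longrightarrow> a = b)"
      proof (intro exI[of _ N] conjI ballI impI)
        fix a b assume m: "Ux n k j a \<inter> N \<noteq> {} \<and> Ux n k j b \<inter> N \<noteq> {}"
        obtain p where p: "p \<in> V n k a" "d w p < 5/2 * \<delta> k" using near m by blast
        obtain q where q: "q \<in> V n k b" "d w q < 5/2 * \<delta> k" using near m by blast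
        show "a = b"
        proof (rule ccontr)
          assume "a \<noteq> b"
          then have "(1/2)^k \<le> d p q" using sep p(1) q(1) by blast
          moreover have "d p q \<le> d p w + d w q" using p q VM wM triangle by blast
          moreover have "d p w = d w p" by (rule commute)
          ultimately show False using p(2) q(2) \<delta>s[of k] \<delta>pos[of k] by linarith
        qed
      qed (use No xN in auto)
    qed
    then show ?thesis using c by (simp add: G_def)
  qed
  have sB: "sigma_sfd X \<B>" unfolding \<B>_def by (rule sigma_sfdI[OF sfdG])
  have fcB: "\<forall>E'\<in>\<B>. fclosed X E'"
    unfolding \<B>_def G_def using Efc by (auto split: prod.splits)
  have bB: "base_for X mtopology f \<B>"
    unfolding base_for_def
  proof (intro allI impI)
    fix W assume W: "openin mtopology W"
    define P where "P = {x \<in> topspace X. f x \<in> W}"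
    have "P \<subseteq> \<Union>{E' \<in> \<B>. E' \<subseteq> P}"
    proof
      fix x assume xP: "x \<in> P"
      then have xt: "x \<in> topspace X" and fxW: "f x \<in> W" by (auto simp: P_def)
      obtain n k a where a: "f x \<in> V n k a" and nb: "\<forall>z\<in>M. \<forall>p\<in>V n k a. d z p < (1/2)^k \<longrightarrow> z \<in> W"
        using cover[OF W fxW] by blast
      have "\<forall>\<^sub>F i in sequentially. g i x \<in> V n k a"
        using lim[OF xt] Vo a unfolding limitin_def by blast
      then obtain j where j: "\<And>i. i \<ge> j \<Longrightarrow> g i x \<in> V n k a"
        unfolding eventually_sequentially by blast
      have VC: "V n k a \<subseteq> Cs n k a"
      proof
        fix z assume z: "z \<in> V n k a"
        then have zM: "z \<in> M" using VM by blast
        have "sdist d (V n k a) z \<le> d z z" by (rule sdist_le[OF VM zM z])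
        then have "sdist d (V n k a) z \<le> \<delta> k" using zM \<delta>pos[of k] by simp
        then show "z \<in> Cs n k a" using zM by (simp add: Cs_def)
      qed
      have xE: "x \<in> E n k j a" using j VC xt by (auto simp: E_def)
      have EB: "E n k j a \<in> \<B>" unfolding \<B>_def G_def
        by (intro UN_I[of "(n, k, j)"]) auto
      have "E n k j a \<subseteq> P"
      proof
        fix z assume z: "z \<in> E n k j a"
        then have zt: "z \<in> topspace X" and ev: "\<And>i. i \<ge> j \<Longrightarrow> g i z \<in> Cs n k a" by (auto simp: E_def)
        have "f z \<in> Cs n k a"
        proof (rule limitin_closedin[OF lim[OF zt]])
          show "closedin mtopology (Cs n k a)" by (rule fclosed_closedin[OF Csfc])
          show "\<forall>\<^sub>F i in sequentially. g i z \<in> Cs n k a"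
            unfolding eventually_sequentially using ev by blast
        qed simp
        then have fzM: "f z \<in> M" and sd: "sdist d (V n k a) (f z) \<le> \<delta> k" by (auto simp: Cs_def)
        have "\<delta> k < (1/2)^k" using \<delta>s[of k] \<delta>pos[of k] by linarith
        then have "sdist d (V n k a) (f z) < (1/2)^k" using sd by linarith
        moreover have "(1/2::real)^k \<le> 1" by (simp add: power_le_one)
        ultimately obtain p where "p \<in> V n k a" "d (f z) p < (1/2)^k"
          using sdist_less_iff[OF VM fzM] by blast
        then have "f z \<in> W" using nb fzM by blast
        then show "z \<in> P" using zt by (simp add: P_def)
      qed
      then show "x \<in> \<Union>{E' \<in> \<B>. E' \<subseteq> P}" using xE EB by blast
    qed
    then have eqP: "P = \<Union>{E' \<in> \<B>. E' \<subseteq> P}" by blast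
    have Peq: "{x \<in> topspace X. f x \<in> W} = P" by (simp add: P_def)
    show "\<exists>\<C>\<subseteq>\<B>. {x \<in> topspace X. f x \<in> W} = \<Union>\<C>"
    proof (rule exI[of _ "{E' \<in> \<B>. E' \<subseteq> P}"], rule conjI)
      show "{E' \<in> \<B>. E' \<subseteq> P} \<subseteq> \<B>" by blast
      show "{x \<in> topspace X. f x \<in> W} = \<Union>{E' \<in> \<B>. E' \<subseteq> P}" using Peq eqP by (rule trans)
    qed
  qed
  show ?thesis unfolding Sigma_f_star_0_def using sB bB fcB by (intro exI[of _ \<B>]) simp
qed

end

theorem mainTheorem1:
  fixes X :: "'a topology" and Y :: "'b topology"
  assumes "metrizable_space Y"
  shows "\<forall>f. f \<in> topspace X \<rightarrow> topspace Y \<longrightarrow>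
           (Baire1 X Y f \<longrightarrow> Sigma_f_star_0 X Y f) \<and>
           (Sigma_f_star_0 X Y f \<longleftrightarrow> K1 X Y f \<and> Sigma_f X Y f)"
proof -
  obtain M d where Md: "Metric_space M d \<and> Y = Metric_space.mtopology M d"
    using assms unfolding metrizable_space_def by metis
  interpret Metric_space M d using Md by simp
  have Y: "Y = mtopology" using Md by simp
  show ?thesis
  proof (intro allI impI conjI iffI)
    fix f assume f: "f \<in> topspace X \<rightarrow> topspace Y"
    then have fM: "f \<in> topspace X \<rightarrow> M" using Y by simp
    show "Baire1 X Y f \<Longrightarrow> Sigma_f_star_0 X Y f" using baire_direction[OF _ fM] Y by simp
    show "Sigma_f_star_0 X Y f \<Longrightarrow> K1 X Y f" by (rule star_imp_K1)
    show "Sigma_f_star_0 X Y f \<Longrightarrow> Sigma_f X Y f" by (rule star_imp_Sigma_f)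
    show "K1 X Y f \<and> Sigma_f X Y f \<Longrightarrow> Sigma_f_star_0 X Y f"
      using mid_direction[OF _ _ fM] Y by simp
  qed
qed

end
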